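(* Let $U=[N]=\{1,\dots,N\}$ be a finite set of candidate neurons, let $\tau\in(0,1]$ be a threshold, and let $E:2^{[N]}\to[0,1]$ be the (regime-conditional) strength set function defined in the context below. Let $A^\star=\{j\in[N]: E(\{j\})\ge\tau\}$ be the set of $\tau$-agonists. Consider the binary hierarchical search procedure $\mathrm{Search}(U)$: for the current group $U$ it computes an upper confidence bound $\widehat{E}^{\mathrm{UCB}}(U)$ from finite-sample estimates; if $\widehat{E}^{\mathrm{UCB}}(U)<\tau$ it prunes $U$ (returns $\emptyset$); otherwise, if $|U|=1$, say $U=\{j\}$, it queries $j$ as a singleton (computing a point estimate $\hat E(\{j\})$ and returning $\{j\}$ if $\hat E(\{j\})\ge\tau$, else $\emptyset$); otherwise it splits $U$ into two halves $U_1,U_2$ and returns $\mathrm{Search}(U_1)\cup\mathrm{Search}(U_2)$. Let $\mathcal{T}$ be the set of all groups (nodes of the full binary splitting tree) that could possibly be queried by this procedure. Assume: (A2) for every group $A$ queried by the search, $A\cap A^\star\neq\emptyset$ implies $E(A)\ge\tau$; (A3) for each tested group $A$, the upper confidence bound satisfies $\Pr\big[E(A)\le\widehat{E}^{\mathrm{UCB}}(A)\big]\ge 1-\alpha_A$, and a group is pruned only if $\widehat{E}^{\mathrm{UCB}}(A)<\tau$; and assume the confidence budgets satisfy $\sum_{A\in\mathcal{T}}\alpha_A\le\alpha_{\mathrm{tot}}$ (equivalently, an alpha-spending schedule over the full tree with total budget at most $\alpha_{\mathrm{tot}}$). Then, with probability at least $1-\alpha_{\mathrm{tot}}$, the procedure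 does not prune any group $A$ that contains an element of $A^\star$. Consequently, with this probability every $j\in A^\star$ lies on an unpruned root-to-leaf path of the splitting tree and is eventually queried as a singleton.
   Context: Setting: a fixed layer of a language model with $N$ candidate neurons (scalar activations) and a fixed baseline regime $b\in\{0,1\}$. Two finite evaluation sets (slices) $\mathcal{D}^+$ and $\mathcal{D}^-$ consist of inputs on which the un-intervened model's binary behavior label equals $b$. For a set $A\subseteq[N]$, the intervention $\mathrm{do}(A)$ replaces the activations of the neurons in $A$ by fixed baseline values, and $\delta_{S}(A)=\Pr_{x\sim\mathcal{D}^S}[\text{post-intervention behavior label of }x\neq b]$ for $S\in\{+,-\}$ (uniform distribution on the slice). The strength is $E(A)=\max\{\delta_+(A),\delta_-(A)\}$. A neuron $j$ is a $\tau$-agonist if $E(\{j\})\ge\tau$. The flip rates are estimated on finite samples, and $\widehat{E}^{\mathrm{UCB}}(A)$ denotes the resulting upper confidence bound on $E(A)$ (e.g., the maximum of one-sided Clopper–Pearson upper bounds for the two slices). *)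

theory Defs
  imports "HOL-Probability.Probability"
begin

text \<open>Flip rate on a finite slice D (uniform distribution):
  lab A x is the post-intervention behaviour label of input x under do(A).\<close>
definition flip_rate :: "(nat set \<Rightarrow> 'x \<Rightarrow> bool) \<Rightarrow> bool \<Rightarrow> 'x set \<Rightarrow> nat set \<Rightarrow> real" where
  "flip_rate lab b D A = real (card {x\<in>D. lab A x \<noteq> b}) / real (card D)"

definition strength :: "(nat set \<Rightarrow> 'x \<Rightarrow> bool) \<Rightarrow> bool \<Rightarrow> 'x set \<Rightarrow> 'x set \<Rightarrow> nat set \<Rightarrow> real" where
  "strength lab b Dp Dm A = max (flip_rate lab b Dp A) (flip_rate lab b Dm A)"

definition agonists :: "(nat set \<Rightarrow> real) \<Rightarrow> real \<Rightarrow> nat \<Rightarrow> nat set" where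
  "agonists E \<tau> N = {j \<in> {1..N}. E {j} \<ge> \<tau>}"

inductive_set split_tree :: "(nat set \<Rightarrow> nat set \<times> nat set) \<Rightarrow> nat set \<Rightarrow> nat set set"
  for split :: "nat set \<Rightarrow> nat set \<times> nat set" and R :: "nat set" where
  root: "R \<in> split_tree split R"
| left: "A \<in> split_tree split R \<Longrightarrow> 2 \<le> card A \<Longrightarrow> fst (split A) \<in> split_tree split R"
| right: "A \<in> split_tree split R \<Longrightarrow> 2 \<le> card A \<Longrightarrow> snd (split A) \<in> split_tree split R"

text \<open>Groups actually tested by Search(R) on the sample outcome w: a group is
  tested; it is pruned iff ucb < tau; an unpruned group of size >= 2 is split and
  both halves are tested; an unpruned singleton is queried as a singleton.\<close>
inductive queried :: "(nat set \<Rightarrow> nat set \<times> nat set) \<Rightarrow> nat set \<Rightarrow> (nat set \<Rightarrow> 'w \<Rightarrow> real)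
    \<Rightarrow> real \<Rightarrow> 'w \<Rightarrow> nat set \<Rightarrow> bool"
  for split R ucb \<tau> w where
  root: "queried split R ucb \<tau> w R"
| left: "queried split R ucb \<tau> w A \<Longrightarrow> \<tau> \<le> ucb A w \<Longrightarrow> 2 \<le> card A
          \<Longrightarrow> queried split R ucb \<tau> w (fst (split A))"
| right: "queried split R ucb \<tau> w A \<Longrightarrow> \<tau> \<le> ucb A w \<Longrightarrow> 2 \<le> card A
          \<Longrightarrow> queried split R ucb \<tau> w (snd (split A))"

definition pruned :: "(nat set \<Rightarrow> nat set \<times> nat set) \<Rightarrow> nat set \<Rightarrow> (nat set \<Rightarrow> 'w \<Rightarrow> real)
    \<Rightarrow> real \<Rightarrow> 'w \<Rightarrow> nat set \<Rightarrow> bool" where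
  "pruned split R ucb \<tau> w A \<longleftrightarrow> queried split R ucb \<tau> w A \<and> ucb A w < \<tau>"

end

theory Submission
  imports Defs
begin

lemma split_tree_sub:
  assumes halves: "\<forall>A. 2 \<le> card A \<longrightarrow>
           fst (split A) \<union> snd (split A) = A \<and> fst (split A) \<inter> snd (split A) = {}
           \<and> card (fst (split A)) = card A div 2"
  shows "A \<in> split_tree split R \<Longrightarrow> A \<subseteq> R"
proof (induction rule: split_tree.induct)
  case root then show ?case by simp
next
  case (left A) then show ?case using halves by blast
next
  case (right A) then show ?case using halves by blast
qed

lemma queried_tree:
  "queried split R ucb \<tau> w A \<Longrightarrow> A \<in> split_tree split R"
  by (induction rule: queried.induct) (auto intro: split_tree.intros)

theorem theoremB1:
  fixes M :: "'w measure" and N :: nat and \<tau> \<alpha>_tot :: real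
    and \<alpha> :: "nat set \<Rightarrow> real" and ucb :: "nat set \<Rightarrow> 'w \<Rightarrow> real"
    and split :: "nat set \<Rightarrow> nat set \<times> nat set"
    and lab :: "nat set \<Rightarrow> 'x \<Rightarrow> bool" and b :: bool and Dp Dm :: "'x set"
  assumes "prob_space M"
    and "0 < \<tau>" and "\<tau> \<le> 1"
    and "finite Dp" and "Dp \<noteq> {}" and "finite Dm" and "Dm \<noteq> {}"
    and "\<forall>x \<in> Dp \<union> Dm. lab {} x = b"
    and halves: "\<forall>A. 2 \<le> card A \<longrightarrow>
           fst (split A) \<union> snd (split A) = A \<and> fst (split A) \<inter> snd (split A) = {}
           \<and> card (fst (split A)) = card A div 2"
    and A2: "\<forall>A \<in> split_tree split {1..N}.
           A \<inter> agonists (strength lab b Dp Dm) \<tau> N \<noteq> {} \<longrightarrow> strength lab b Dp Dm A \<ge> \<tau>"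
    and A3: "\<forall>A \<in> split_tree split {1..N}. ucb A \<in> borel_measurable M \<and>
           measure M {w \<in> space M. strength lab b Dp Dm A \<le> ucb A w} \<ge> 1 - \<alpha> A"
    and budget: "(\<Sum>A \<in> split_tree split {1..N}. \<alpha> A) \<le> \<alpha>_tot"
  shows "\<exists>G \<in> sets M. measure M G \<ge> 1 - \<alpha>_tot \<and>
           (\<forall>w \<in> G.
              (\<forall>A. pruned split {1..N} ucb \<tau> w A \<longrightarrow> A \<inter> agonists (strength lab b Dp Dm) \<tau> N = {})
            \<and> (\<forall>j \<in> agonists (strength lab b Dp Dm) \<tau> N.
                 queried split {1..N} ucb \<tau> w {j} \<and> \<tau> \<le> ucb {j} w))"
proof -
  interpret P: prob_space M by fact
  define T where "T = split_tree split {1..N}"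
  define E where "E = strength lab b Dp Dm"
  define Ag where "Ag = agonists E \<tau> N"
  have Tsub: "A \<in> T \<Longrightarrow> A \<subseteq> {1..N}" for A
    unfolding T_def using split_tree_sub[OF halves] by blast
  have finT: "finite T"
    by (rule finite_subset[of _ "Pow {1..N}"]) (use Tsub in auto)
  have meas: "A \<in> T \<Longrightarrow> {w \<in> space M. E A \<le> ucb A w} \<in> sets M" for A
  proof -
    assume "A \<in> T"
    then have [measurable]: "ucb A \<in> borel_measurable M" using A3 T_def \<open>A \<in> T\<close> by blast
    then show ?thesis unfolding borel_measurable_iff_ge by blast
  qed
  define G where "G = {w \<in> space M. \<forall>A\<in>T. E A \<le> ucb A w}"
  have GM: "G \<in> sets M" unfolding G_def
    by (rule sets.sets_Collect_finite_All[OF meas finT])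
  have compl: "space M - G = (\<Union>A\<in>T. space M - {w \<in> space M. E A \<le> ucb A w})"
    unfolding G_def by auto
  have "measure M (space M - G) \<le> (\<Sum>A\<in>T. measure M (space M - {w \<in> space M. E A \<le> ucb A w}))"
    unfolding compl by (rule P.finite_measure_subadditive_finite[OF finT]) (use meas in auto)
  also have "\<dots> \<le> (\<Sum>A\<in>T. \<alpha> A)"
  proof (rule sum_mono)
    fix A assume "A \<in> T"
    then show "measure M (space M - {w \<in> space M. E A \<le> ucb A w}) \<le> \<alpha> A"
    proof -
      have "measure M {w \<in> space M. E A \<le> ucb A w} \<ge> 1 - \<alpha> A"
        using A3 \<open>A \<in> T\<close> unfolding T_def E_def by blast
      then show ?thesis using P.prob_compl[OF meas[OF \<open>A \<in> T\<close>]] by simp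
    qed
  qed
  also have "\<dots> \<le> \<alpha>_tot" using budget T_def by simp
  finally have "measure M G \<ge> 1 - \<alpha>_tot"
    using P.prob_compl[OF GM] by simp
  moreover have "\<forall>w \<in> G.
              (\<forall>A. pruned split {1..N} ucb \<tau> w A \<longrightarrow> A \<inter> Ag = {})
            \<and> (\<forall>j \<in> Ag. queried split {1..N} ucb \<tau> w {j} \<and> \<tau> \<le> ucb {j} w)"
  proof
    fix w assume wG: "w \<in> G"
    have key: "queried split {1..N} ucb \<tau> w A \<Longrightarrow> A \<inter> Ag \<noteq> {} \<Longrightarrow> \<tau> \<le> ucb A w" for A
    proof -
      assume q: "queried split {1..N} ucb \<tau> w A" and ne: "A \<inter> Ag \<noteq> {}"
      have AT: "A \<in> T" using queried_tree[OF q] T_def by simp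
      then have "E A \<le> ucb A w" using wG G_def by auto
      moreover have "\<tau> \<le> E A" using A2 AT ne unfolding T_def E_def Ag_def by blast
      ultimately show ?thesis by simp
    qed
    show "(\<forall>A. pruned split {1..N} ucb \<tau> w A \<longrightarrow> A \<inter> Ag = {})
            \<and> (\<forall>j \<in> Ag. queried split {1..N} ucb \<tau> w {j} \<and> \<tau> \<le> ucb {j} w)"
    proof (intro conjI allI ballI impI)
      fix A assume "pruned split {1..N} ucb \<tau> w A"
      then show "A \<inter> Ag = {}" using key unfolding pruned_def by force
    next
      fix j assume jA: "j \<in> Ag"
      have desc: "\<forall>A. card A \<le> n \<longrightarrow> queried split {1..N} ucb \<tau> w A \<longrightarrow> j \<in> A
                  \<longrightarrow> queried split {1..N} ucb \<tau> w {j}" for n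
      proof (induction n rule: less_induct)
        case (less n)
        show ?case
        proof (intro allI impI)
          fix A assume c: "card A \<le> n" and q: "queried split {1..N} ucb \<tau> w A" and j: "j \<in> A"
          have fin: "finite A" using Tsub queried_tree[OF q] T_def
            by (meson finite_atLeastAtMost finite_subset)
          have u: "\<tau> \<le> ucb A w" using key[OF q] j jA by blast
          have "card A \<noteq> 0" using fin j by auto
          show "queried split {1..N} ucb \<tau> w {j}"
          proof (cases "card A = 1")
            case True
            then obtain x where "A = {x}" by (auto simp: card_Suc_eq)
            then show ?thesis using q j by simp
          next
            case False
            then have c2: "2 \<le> card A" using \<open>card A \<noteq> 0\<close> by simp
            have hh: "fst (split A) \<union> snd (split A) = A \<and> fst (split A) \<inter> snd (split A) = {}
              \<and> card (fst (split A)) = card A div 2" using mp[OF spec[OF halves, of A] c2] .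
            note h = conjunct1[OF hh] conjunct1[OF conjunct2[OF hh]] conjunct2[OF conjunct2[OF hh]]
            have cs: "card (snd (split A)) = card A - card A div 2"
            proof -
              have f1: "finite (fst (split A))" "finite (snd (split A))"
                using fin h(1) by (metis finite_Un)+
              have "card A = card (fst (split A)) + card (snd (split A))"
                using card_Un_disjoint[OF f1 h(2)] h(1) by simp
              then show ?thesis using h(3) by linarith
            qed
            show ?thesis
            proof (cases "j \<in> fst (split A)")
              case True
              have lt: "card (fst (split A)) < n" using h(3) c c2 by linarith
              show ?thesis using mp[OF mp[OF mp[OF spec[OF less.IH[OF lt], of "fst (split A)"] order_refl] queried.left[OF q u c2]] True] .
            next
              case False
              then have "j \<in> snd (split A)" using h j by blast
              moreover have lt: "card (snd (split A)) < n" using cs c c2 by linarith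
              ultimately show ?thesis using mp[OF mp[OF mp[OF spec[OF less.IH[OF lt], of "snd (split A)"] order_refl] queried.right[OF q u c2]]] by blast
            qed
          qed
        qed
      qed
      have "j \<in> {1..N}" using jA unfolding Ag_def agonists_def by simp
      then show qj: "queried split {1..N} ucb \<tau> w {j}"
        using mp[OF mp[OF mp[OF spec[OF desc[of "card {1..N::nat}"], of "{1..N}"] order_refl] queried.root]] by blast
      show "\<tau> \<le> ucb {j} w" using key[OF qj] jA by blast
    qed
  qed
  ultimately show ?thesis using GM unfolding Ag_def E_def by blast
qed

end
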